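(* Let $\rho\in(0,1)$ and $k\ge1$ an integer, and let $\tilde\varepsilon=\rho\,\frac{1+\cos(\frac{2k-1}{2k}\pi)}{1-\cos(\frac{2k-1}{2k}\pi)}$. For every $\varepsilon\in[0,\tilde\varepsilon]$, $$\|p_\varepsilon\|_1=\frac{\tilde\rho_\varepsilon}{2}\Big(\frac{1}{\rho+\varepsilon}\Big)^k\Big(\big(2+\rho-\varepsilon-2\sqrt{(1+\rho)(1-\varepsilon)}\big)^k+\big(2+\rho-\varepsilon+2\sqrt{(1+\rho)(1-\varepsilon)}\big)^k\Big),$$ where $\tilde\rho_\varepsilon=\frac{2\beta_\varepsilon^k}{1+\beta_\varepsilon^{2k}}$ and $\beta_\varepsilon=\frac{1-\sqrt{1-\frac{\rho+\varepsilon}{1+\varepsilon}}}{1+\sqrt{1-\frac{\rho+\varepsilon}{1+\varepsilon}}}$.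
   Context: $\mathbb{R}_k[X]$ denotes real polynomials of degree at most $k$, and $\|p\|_1$ is the sum of absolute values of the coefficients of $p$. $p_\varepsilon$ denotes the minimizer of $\max_{x\in[-\varepsilon,\rho]}|p(x)|$ over $p\in\mathbb{R}_k[X]$ with $p(1)=1$; explicitly $p_\varepsilon(X)=T_k\big(2\frac{X+\varepsilon}{\rho+\varepsilon}-1\big)/\big|T_k\big(2\frac{1+\varepsilon}{\rho+\varepsilon}-1\big)\big|$, with $T_k$ the Chebyshev polynomial of the first kind of degree $k$. *)

theory Defs
  imports "HOL-Analysis.Analysis" "HOL-Computational_Algebra.Polynomial"
begin

fun cheb_T :: "nat \<Rightarrow> real poly" where
  "cheb_T 0 = 1"
| "cheb_T (Suc 0) = [:0, 1:]"
| "cheb_T (Suc (Suc n)) = [:0, 2:] * cheb_T (Suc n) - cheb_T n"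

definition poly_l1 :: "real poly \<Rightarrow> real" where
  "poly_l1 p = (\<Sum>i\<le>degree p. \<bar>coeff p i\<bar>)"

text \<open>The optimal polynomial p_eps on [-eps, rho] with p(1) = 1 (explicit Chebyshev form):
  p_eps(X) = T_k(2 (X+eps)/(rho+eps) - 1) / |T_k(2 (1+eps)/(rho+eps) - 1)|.\<close>
definition p_eps :: "real \<Rightarrow> nat \<Rightarrow> real \<Rightarrow> real poly" where
  "p_eps \<rho> k \<epsilon> =
     smult (1 / \<bar>poly (cheb_T k) (2 * (1 + \<epsilon>) / (\<rho> + \<epsilon>) - 1)\<bar>)
       (pcompose (cheb_T k) [: 2 * \<epsilon> / (\<rho> + \<epsilon>) - 1, 2 / (\<rho> + \<epsilon>) :])"

end

theory Submission
  imports Defs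
begin
lemma cheb_uv:
  fixes u v x :: real
  assumes "u + v = 2 * x" "u * v = 1"
  shows "poly (cheb_T n) x = (u ^ n + v ^ n) / 2"
proof (induction n rule: cheb_T.induct)
  case 1 then show ?case by simp
next
  case 2 then show ?case using assms by simp
next
  case (3 n)
  have u2: "u ^ Suc (Suc n) = 2 * x * u ^ Suc n - u ^ n"
  proof -
    have "u ^ Suc (Suc n) = u * u * u ^ n" by simp
    also have "u * u = 2 * x * u - 1" using assms by algebra
    finally show ?thesis by (simp add: algebra_simps)
  qed
  have v2: "v ^ Suc (Suc n) = 2 * x * v ^ Suc n - v ^ n"
  proof -
    have "v ^ Suc (Suc n) = v * v * v ^ n" by simp
    also have "v * v = 2 * x * v - 1" using assms by algebra
    finally show ?thesis by (simp add: algebra_simps)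
  qed
  show ?case using 3 u2 v2 by (simp add: algebra_simps)
qed

lemma cheb_cos: "poly (cheb_T n) (cos t) = cos (real n * t)"
proof (induction n rule: cheb_T.induct)
  case 1 then show ?case by simp
next
  case 2 then show ?case by simp
next
  case (3 n)
  have "cos (real (Suc (Suc n)) * t) = 2 * cos t * cos (real (Suc n) * t) - cos (real n * t)"
    using cos_times_cos[of t "real (Suc n) * t"] by (simp add: algebra_simps)
  then show ?case using 3 by (simp add: algebra_simps)
qed

lemma cheb_degree: "degree (cheb_T n) = n"
proof (induction n rule: cheb_T.induct)
  case 1 then show ?case by simp
next
  case 2 then show ?case by simp
next
  case (3 n)
  have "cheb_T (Suc n) \<noteq> 0" using 3 by (metis degree_0 nat.distinct(1))
  then have d: "degree ([:0, 2:] * cheb_T (Suc n)) = Suc (Suc n)"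
    using 3 by (subst degree_mult_eq) auto
  have "degree ([:0, 2:] * cheb_T (Suc n) - cheb_T n) = Suc (Suc n)"
    using 3 d degree_add_eq_left[of "- cheb_T n" "[:0, 2:] * cheb_T (Suc n)"] by simp
  then show ?case by simp
qed

lemma alt_step:
  fixes q :: "real poly"
  assumes "r \<ge> 0" "\<forall>i. 0 \<le> \<sigma> * (-1)^i * coeff q i"
  shows "\<forall>i. 0 \<le> (-\<sigma>) * (-1)^i * coeff ([:-r, 1:] * q) i"
proof
  fix i
  show "0 \<le> (-\<sigma>) * (-1)^i * coeff ([:-r, 1:] * q) i"
  proof (cases i)
    case 0
    then show ?thesis using assms(1) assms(2)[rule_format, of 0]
      by (simp add: mult_nonneg_nonneg mult.left_commute[of \<sigma> r])
  next
    case (Suc j)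
    have c: "coeff ([:-r, 1:] * q) i = - r * coeff q i + coeff q j"
      using Suc by simp
    have a: "0 \<le> \<sigma> * (-1)^i * coeff q i" using assms(2) by blast
    have b: "0 \<le> \<sigma> * (-1)^j * coeff q j" using assms(2) by blast
    have "(-\<sigma>) * (-1)^i * coeff ([:-r, 1:] * q) i
        = r * (\<sigma> * (-1)^i * coeff q i) + \<sigma> * (-1)^j * coeff q j"
      using Suc c by (simp add: algebra_simps)
    then show ?thesis using a b assms(1) by simp
  qed
qed

lemma alt_roots:
  fixes S :: "real set"
  assumes "finite S"
  shows "card S = degree p \<Longrightarrow> p \<noteq> 0 \<Longrightarrow> (\<forall>s\<in>S. s \<ge> 0 \<and> poly p s = 0) \<Longrightarrow>
    \<exists>\<sigma>::real. \<bar>\<sigma>\<bar> = 1 \<and> (\<forall>i. 0 \<le> \<sigma> * (-1)^i * coeff p i)"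
  using assms
proof (induction S arbitrary: p rule: finite_induct)
  case empty
  then have "p = [:coeff p 0:]" by (metis degree_0_id card.empty)
  show ?case
  proof (cases "coeff p 0 \<ge> 0")
    case True
    show ?thesis
      by (rule exI[of _ 1]) (metis True \<open>p = _\<close> coeff_pCons_0 coeff_pCons_Suc abs_one coeff_0 mult_1 power_0 order_refl not0_implies_Suc mult_zero_right)
  next
    case False
    show ?thesis
    proof (rule exI[of _ "-1"], intro conjI allI)
      fix i show "0 \<le> -1 * (-1)^i * coeff p i"
        using False \<open>p = _\<close> by (cases i) (metis coeff_pCons_0 power_0 mult_1 mult_minus1 neg_0_le_iff_le nle_le, metis coeff_pCons_Suc coeff_0 mult_zero_right order_refl)
    qed simp
  qed
next
  case (insert r S)
  have "poly p r = 0" using insert by auto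
  then obtain q where pq: "p = [:-r, 1:] * q" by (metis poly_eq_0_iff_dvd dvd_def)
  have q0: "q \<noteq> 0" using pq insert by auto
  have dq: "degree p = degree q + 1" using pq q0 degree_mult_eq[of "[:-r, 1:]" q] by (simp del: mult_pCons_left)
  have cS: "card S = degree q" using insert dq by simp
  have rq: "\<forall>s\<in>S. s \<ge> 0 \<and> poly q s = 0"
  proof
    fix s assume s: "s \<in> S"
    then have "s \<noteq> r" using insert by auto
    moreover have "poly p s = 0" "s \<ge> 0" using insert s by auto
    ultimately show "s \<ge> 0 \<and> poly q s = 0" using pq by simp
  qed
  obtain \<sigma> where s: "\<bar>\<sigma>\<bar> = 1" "\<forall>i. 0 \<le> \<sigma> * (-1)^i * coeff q i"
    using insert.IH[OF cS q0 rq] insert.prems by blast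
  have "r \<ge> 0" using insert by auto
  from alt_step[OF this s(2)] pq s(1) show ?case by (metis abs_minus_cancel)
qed

lemma l1_alt:
  fixes p :: "real poly"
  assumes "\<bar>\<sigma>\<bar> = 1" "\<forall>i. 0 \<le> \<sigma> * (-1)^i * coeff p i"
  shows "poly_l1 p = \<bar>poly p (-1)\<bar>"
proof -
  have e: "\<bar>coeff p i\<bar> = \<sigma> * (coeff p i * (-1)^i)" for i
  proof -
    have "\<bar>coeff p i\<bar> = \<bar>\<sigma> * (-1)^i * coeff p i\<bar>" using assms(1) by (simp add: abs_mult)
    also have "\<dots> = \<sigma> * (-1)^i * coeff p i" using assms(2) by simp
    finally show ?thesis by (simp add: algebra_simps)
  qed
  have "poly_l1 p = \<sigma> * poly p (-1)"
    unfolding poly_l1_def poly_altdef by (simp add: e sum_distrib_left)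
  moreover have "poly_l1 p \<ge> 0" unfolding poly_l1_def by (simp add: sum_nonneg)
  ultimately show ?thesis using assms(1)
    by (metis abs_mult abs_of_nonneg mult_1)
qed

lemma L1: "(t::real) > 0 \<Longrightarrow> 1 / \<bar>(t + 1 / t) / 2\<bar> = 2 * t / (1 + t^2)"
  by (simp add: field_simps power2_eq_square)

lemma L2: "((- A / (r::real)) ^ k + (- B / r) ^ k) / 2 = (-1) ^ k * ((A ^ k + B ^ k) / r ^ k / 2)"
proof -
  have "(- A / r) ^ k = (-1)^k * (A^k / r^k)" "(- B / r) ^ k = (-1)^k * (B^k / r^k)"
    by (simp_all add: power_minus[symmetric] power_divide[symmetric])
  then show ?thesis by (simp add: add_divide_distrib algebra_simps)
qed

lemma L3: "(X::real) * (Y / r ^ k / 2) = X / 2 * (1 / r) ^ k * Y"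
  by (simp add: power_one_over)

theorem lemma3:
  fixes \<rho> \<epsilon> :: real and k :: nat
  assumes "0 < \<rho>" "\<rho> < 1" "1 \<le> k"
    and "0 \<le> \<epsilon>"
    and "\<epsilon> \<le> \<rho> * (1 + cos ((2 * real k - 1) / (2 * real k) * pi))
                    / (1 - cos ((2 * real k - 1) / (2 * real k) * pi))"
  shows "let \<beta> = (1 - sqrt (1 - (\<rho> + \<epsilon>) / (1 + \<epsilon>))) / (1 + sqrt (1 - (\<rho> + \<epsilon>) / (1 + \<epsilon>)));
             \<rho>t = 2 * \<beta> ^ k / (1 + \<beta> ^ (2 * k))
         in poly_l1 (p_eps \<rho> k \<epsilon>) =
            \<rho>t / 2 * (1 / (\<rho> + \<epsilon>)) ^ k *
            ((2 + \<rho> - \<epsilon> - 2 * sqrt ((1 + \<rho>) * (1 - \<epsilon>))) ^ k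
             + (2 + \<rho> - \<epsilon> + 2 * sqrt ((1 + \<rho>) * (1 - \<epsilon>))) ^ k)"
proof -
  define th where "th = (\<lambda>j::nat. (2 * real j - 1) / (2 * real k) * pi)"
  define c where "c = cos (th k)"
  define a where "a = 2 / (\<rho> + \<epsilon>)"
  define b where "b = 2 * \<epsilon> / (\<rho> + \<epsilon>) - 1"
  define z where "z = 2 * (1 + \<epsilon>) / (\<rho> + \<epsilon>) - 1"
  define C where "C = 1 / \<bar>poly (cheb_T k) z\<bar>"
  define P where "P = p_eps \<rho> k \<epsilon>"
  have P_def': "P = smult C (pcompose (cheb_T k) [:b, a:])"
    unfolding P_def p_eps_def C_def z_def a_def b_def by simp
  have rpos: "\<rho> + \<epsilon> > 0" using assms by simp
  have rne: "\<rho> + \<epsilon> \<noteq> 0" "\<epsilon> + \<rho> \<noteq> 0" "1 + \<epsilon> \<noteq> 0" using assms by auto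
  have kpos: "real k > 0" using assms by simp
  have thb: "0 < th j \<and> th j < pi" if "1 \<le> j" "j \<le> k" for j
  proof -
    have "0 < 2 * real j - 1" "2 * real j - 1 < 2 * real k" using that by auto
    moreover have "(2*real j - 1)*pi < (2*real k)*pi" using that pi_gt_zero by (intro mult_strict_right_mono) auto
    ultimately show ?thesis unfolding th_def using kpos pi_gt_zero by (simp add: field_simps)
  qed
  have thk: "pi / 2 \<le> th k"
  proof -
    have "1/2 \<le> (2 * real k - 1) / (2 * real k)" using assms(3) kpos by (simp add: field_simps)
    then show ?thesis unfolding th_def by (metis mult_right_mono pi_ge_zero times_divide_eq_left mult_1)
  qed
  have c0: "c \<le> 0"
    unfolding c_def using cos_monotone_0_pi_le[of "pi/2" "th k"] thk thb[of k] assms(3) by simp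
  have c1: "c > -1"
    unfolding c_def using cos_monotone_0_pi[of "th k" pi] thb[of k] assms(3) by simp
  have epsc: "\<epsilon> * (1 - c) \<le> \<rho> * (1 + c)"
    using assms(5) c1 c0 unfolding c_def th_def by (simp add: field_simps)
  have epsr: "\<epsilon> \<le> \<rho>"
  proof -
    have "\<epsilon> - \<rho> \<le> c * (\<epsilon> + \<rho>)" using epsc by (simp add: algebra_simps)
    also have "\<dots> \<le> 0" using c0 rpos by (simp add: mult_nonpos_nonneg)
    finally show ?thesis by simp
  qed
  have bc: "b \<le> c"
  proof -
    have "b = (\<epsilon> - \<rho>) / (\<rho> + \<epsilon>)" unfolding b_def using rpos by (simp add: field_simps)
    also have "\<dots> \<le> c" using rpos epsc by (simp add: field_simps)
    finally show ?thesis .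
  qed
  have apos: "a > 0" unfolding a_def using rpos by simp
  define s where "s = sqrt (1 - (\<rho> + \<epsilon>) / (1 + \<epsilon>))"
  define \<beta> where "\<beta> = (1 - s) / (1 + s)"
  have sarg: "1 - (\<rho> + \<epsilon>) / (1 + \<epsilon>) = (1 - \<rho>) / (1 + \<epsilon>)" using assms by (simp add: field_simps)
  have s2: "s^2 = (1 - \<rho>) / (1 + \<epsilon>)"
    unfolding s_def sarg using assms by simp
  have s0: "0 \<le> s" unfolding s_def sarg using assms by simp
  have s1: "s < 1" unfolding s_def sarg using assms by simp
  have bpos: "\<beta> > 0" unfolding \<beta>_def using s0 s1 by simp
  have bz: "\<beta> + 1 / \<beta> = 2 * z"
  proof -
    have "\<beta> + 1 / \<beta> = 2 * (1 + s^2) / (1 - s^2)"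
      unfolding \<beta>_def using s0 s1 by (simp add: field_simps power2_eq_square)
    also have "\<dots> = 2 * ((2 + \<epsilon> - \<rho>) / (1 + \<epsilon>)) / ((\<rho> + \<epsilon>) / (1 + \<epsilon>))"
    proof -
      have "1 + s^2 = (2 + \<epsilon> - \<rho>) / (1 + \<epsilon>)" "1 - s^2 = (\<rho> + \<epsilon>) / (1 + \<epsilon>)"
        unfolding s2 using assms by (simp_all add: field_simps)
      then show ?thesis by simp
    qed
    also have "\<dots> = 2 * (2 + \<epsilon> - \<rho>) / (\<rho> + \<epsilon>)" using rne by simp
    also have "\<dots> = 2 * z" unfolding z_def using rne by (simp add: field_simps)
    finally show ?thesis .
  qed
  have Tz: "poly (cheb_T k) z = (\<beta> ^ k + (1 / \<beta>) ^ k) / 2"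
    by (rule cheb_uv) (use bz bpos in auto)
  have Tzpos: "poly (cheb_T k) z > 0" unfolding Tz using bpos by (intro divide_pos_pos add_pos_pos zero_less_power) auto
  have Cval: "C = 2 * \<beta> ^ k / (1 + \<beta> ^ (2 * k))"
  proof -
    have "(1 / \<beta>) ^ k = 1 / \<beta> ^ k" by (simp add: power_one_over)
    moreover have "\<beta> ^ (2 * k) = (\<beta> ^ k)^2" by (simp add: power_mult[symmetric] mult.commute)
    ultimately show ?thesis unfolding C_def Tz using L1[of "\<beta> ^ k"] bpos by simp
  qed
  have Cpos: "C > 0" unfolding C_def using Tzpos by simp
  define S where "S = (\<lambda>j. (cos (th j) - b) / a) ` {1..k}"
  have cardS: "card S = k"
  proof -
    have "inj_on (\<lambda>j. (cos (th j) - b) / a) {1..k}"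
    proof
      fix i j assume ij: "i \<in> {1..k}" "j \<in> {1..k}" "(cos (th i) - b) / a = (cos (th j) - b) / a"
      then have c: "cos (th i) = cos (th j)" using apos by simp
      have "0 < th i \<and> th i < pi" "0 < th j \<and> th j < pi" using thb ij(1,2) by auto
      then have "th i = th j" using cos_inj_pi[of "th i" "th j"] c by auto
      then show "i = j" unfolding th_def using kpos by simp
    qed
    then show ?thesis unfolding S_def using card_image by fastforce
  qed
  have degP: "degree P = k"
    unfolding P_def' using Cpos apos by (simp add: degree_pcompose cheb_degree)
  have P0: "P \<noteq> 0" using degP assms(3) by auto
  have rootsS: "\<forall>x\<in>S. x \<ge> 0 \<and> poly P x = 0"
  proof
    fix x assume "x \<in> S"
    then obtain j where j: "j \<in> {1..k}" "x = (cos (th j) - b) / a" unfolding S_def by auto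
    have "cos (th k) \<le> cos (th j)"
    proof (rule cos_monotone_0_pi_le)
      show "0 \<le> th j" using thb[of j] j by auto
      show "th j \<le> th k" unfolding th_def using j kpos by (simp add: divide_right_mono mult_right_mono)
      show "th k \<le> pi" using thb[of k] assms by auto
    qed
    then have "x \<ge> 0" using j bc apos unfolding c_def by simp
    moreover have "poly P x = 0"
    proof -
      have "b + x * a = cos (th j)" using j apos by simp
      moreover have "real k * th j = real j * pi - pi / 2"
        unfolding th_def using kpos by (simp add: field_simps)
      moreover have "cos (real j * pi - pi / 2) = 0"
        by (simp add: cos_diff)
      ultimately show ?thesis unfolding P_def' by (simp add: poly_pcompose cheb_cos)
    qed
    ultimately show "x \<ge> 0 \<and> poly P x = 0" by simp
  qed
  obtain \<sigma> where sg: "\<bar>\<sigma>\<bar> = 1" "\<forall>i. 0 \<le> \<sigma> * (-1)^i * coeff P i"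
    using alt_roots[of S P] cardS degP P0 rootsS unfolding S_def by auto
  have l1: "poly_l1 P = C * \<bar>poly (cheb_T k) (b - a)\<bar>"
    using l1_alt[OF sg] Cpos unfolding P_def' by (simp add: poly_pcompose abs_mult)
  define R where "R = sqrt ((1 + \<rho>) * (1 - \<epsilon>))"
  define A where "A = 2 + \<rho> - \<epsilon> - 2 * R"
  define B where "B = 2 + \<rho> - \<epsilon> + 2 * R"
  have R2: "R^2 = (1 + \<rho>) * (1 - \<epsilon>)" unfolding R_def using assms epsr by simp
  have R0: "R \<ge> 0" unfolding R_def using assms epsr by simp
  have AB: "A * B = (\<rho> + \<epsilon>)^2" unfolding A_def B_def
    using R2 by (simp add: algebra_simps power2_eq_square)
  have Bpos: "B > 0" unfolding B_def using R0 assms epsr by simp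
  have Apos: "A > 0" proof -
    have "0 < A * B" using AB rpos by simp
    then show ?thesis using zero_less_mult_pos2[of A B] Bpos by blast
  qed
  have Tba: "poly (cheb_T k) (b - a) = ((- A / (\<rho> + \<epsilon>)) ^ k + (- B / (\<rho> + \<epsilon>)) ^ k) / 2"
  proof (rule cheb_uv)
    show "- A / (\<rho> + \<epsilon>) + - B / (\<rho> + \<epsilon>) = 2 * (b - a)"
      unfolding A_def B_def a_def b_def using rpos by (simp add: field_simps)
    show "- A / (\<rho> + \<epsilon>) * (- B / (\<rho> + \<epsilon>)) = 1"
    proof -
      have "- A / (\<rho> + \<epsilon>) * (- B / (\<rho> + \<epsilon>)) = (A * B) / (\<rho> + \<epsilon>)^2"
        by (simp add: power2_eq_square)
      then show ?thesis using AB rne by simp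
    qed
  qed
  have absT: "\<bar>poly (cheb_T k) (b - a)\<bar> = (A ^ k + B ^ k) / (\<rho> + \<epsilon>) ^ k / 2"
  proof -
    have "poly (cheb_T k) (b - a) = (-1) ^ k * ((A ^ k + B ^ k) / (\<rho> + \<epsilon>) ^ k / 2)"
      unfolding Tba by (rule L2)
    then show ?thesis using Apos Bpos rpos by (simp add: abs_mult)
  qed
  show ?thesis
    unfolding Let_def s_def[symmetric] \<beta>_def[symmetric] R_def[symmetric] A_def[symmetric] B_def[symmetric]
      P_def[symmetric] l1 absT Cval
    by (rule L3)
qed
end
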